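(* Let $p$ be an odd prime, $r,m$ positive integers and $s\in\{0,1,\dots,mp^{r-1}-1\}$. Then $$\binom{mp^r}{sp}\equiv\binom{mp^{r-1}}{s}\pmod{p^{2r}}.$$ *)

theory Defs
  imports "HOL-Number_Theory.Number_Theory"
begin

end

theory Submission
  imports Defs
begin

lemma fact_add_prod: "fact (a+b) = (fact a :: nat) * (\<Prod>j\<in>{1..b}. a + j)"
proof (induction b)
  case 0 then show ?case by simp
next
  case (Suc b)
  have "{1..Suc b} = insert (Suc b) {1..b}" by auto
  then have "(\<Prod>j\<in>{1..Suc b}. a + j) = (a + Suc b) * (\<Prod>j\<in>{1..b}. a + j)" by simp
  then show ?case using Suc by (simp add: algebra_simps)
qed

lemma split_prod:
  fixes g :: "nat \<Rightarrow> nat" assumes "p > 0"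
  shows "(\<Prod>j\<in>{1..s*p}. g j) = (\<Prod>t\<in>{1..s}. g (t*p)) * (\<Prod>j\<in>{j\<in>{1..s*p}. \<not> p dvd j}. g j)"
proof -
  have e1: "{1..s*p} \<inter> {j. p dvd j} = (\<lambda>t. t*p) ` {1..s}"
  proof
    show "{1..s*p} \<inter> {j. p dvd j} \<subseteq> (\<lambda>t. t*p) ` {1..s}"
    proof
      fix j assume "j \<in> {1..s*p} \<inter> {j. p dvd j}"
      then obtain t where t: "j = t*p" "1 \<le> j" "j \<le> s*p" by (auto elim!: dvdE simp: mult.commute)
      then have "1 \<le> t" "t \<le> s" using assms by (auto simp: mult_le_cancel2)
      then show "j \<in> (\<lambda>t. t*p) ` {1..s}" using t by auto
    qed
  next
    show "(\<lambda>t. t*p) ` {1..s} \<subseteq> {1..s*p} \<inter> {j. p dvd j}" using assms by auto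
  qed
  have e2: "{1..s*p} - {j. p dvd j} = {j\<in>{1..s*p}. \<not> p dvd j}" by auto
  have inj: "inj_on (\<lambda>t. t*p) {1..s}" using assms by (auto simp: inj_on_def)
  have "(\<Prod>j\<in>{1..s*p}. g j) = (\<Prod>j\<in>{1..s*p} \<inter> {j. p dvd j}. g j) * (\<Prod>j\<in>{1..s*p} - {j. p dvd j}. g j)"
    by (rule prod.Int_Diff) simp
  also have "(\<Prod>j\<in>{1..s*p} \<inter> {j. p dvd j}. g j) = (\<Prod>t\<in>{1..s}. g (t*p))"
    unfolding e1 using prod.reindex[OF inj] by simp
  finally show ?thesis unfolding e2 .
qed

lemma binom_identity:
  fixes p s k :: nat assumes "p > 0"
  defines "Q \<equiv> {j\<in>{1..s*p}. \<not> p dvd j}"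
  shows "((s*p + k*p) choose (s*p)) * (\<Prod>j\<in>Q. j) = ((s+k) choose s) * (\<Prod>j\<in>Q. j + k*p)"
proof -
  define C where "C = (s*p + k*p) choose (s*p)"
  define A where "A = (\<Prod>j\<in>Q. j + k*p)"
  define B where "B = (\<Prod>j\<in>Q. j)"
  have f1: "fact (k*p + s*p) = (fact (k*p) :: nat) * (\<Prod>j\<in>{1..s*p}. k*p + j)" by (rule fact_add_prod)
  have f2: "fact (s*p) * fact (k*p) * C = (fact (s*p + k*p) :: nat)"
    using binomial_fact_lemma[of "s*p" "s*p+k*p"] unfolding C_def by simp
  have f3: "fact (s*p) * C = (\<Prod>j\<in>{1..s*p}. k*p + j)"
    using f1 f2 by (simp add: algebra_simps)
  have f4: "(\<Prod>j\<in>{1..s*p}. k*p + j) = p^s * (\<Prod>t\<in>{1..s}. k + t) * A"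
  proof -
    have "(\<Prod>j\<in>{1..s*p}. k*p + j) = (\<Prod>t\<in>{1..s}. k*p + t*p) * A"
      unfolding A_def Q_def using split_prod[OF assms(1), of "\<lambda>j. k*p + j" s] by (simp add: add.commute)
    moreover have "(\<Prod>t\<in>{1..s}. k*p + t*p) = (\<Prod>t\<in>{1..s}. p * (k + t))"
      by (simp add: algebra_simps)
    moreover have "(\<Prod>t\<in>{1..s}. p * (k + t)) = p^s * (\<Prod>t\<in>{1..s}. k + t)"
      by (simp add: prod.distrib)
    ultimately show ?thesis by simp
  qed
  have f5: "(fact (s*p) :: nat) = p^s * fact s * B"
  proof -
    have "(fact (s*p) :: nat) = (\<Prod>j\<in>{1..s*p}. 0 + j)" using fact_add_prod[of 0 "s*p"] by simp
    also have "\<dots> = (\<Prod>t\<in>{1..s}. t*p) * B"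
      unfolding B_def Q_def using split_prod[OF assms(1), of "\<lambda>j. j" s] by simp
    also have "(\<Prod>t\<in>{1..s}. t*p) = (\<Prod>t\<in>{1..s}. p * t)" by (simp add: mult.commute)
    also have "\<dots> = p^s * fact s" using fact_add_prod[of 0 s] by (simp add: prod.distrib)
    finally show ?thesis .
  qed
  have f6: "(\<Prod>t\<in>{1..s}. k + t) = fact s * ((s+k) choose s)"
  proof -
    have "fact (k+s) = (fact k :: nat) * (\<Prod>t\<in>{1..s}. k + t)" by (rule fact_add_prod)
    moreover have "fact s * fact k * ((s+k) choose s) = (fact (s+k) :: nat)"
      using binomial_fact_lemma[of s "s+k"] by simp
    ultimately show ?thesis by (simp add: algebra_simps)
  qed
  have "p^s * fact s * (C * B) = p^s * fact s * (((s+k) choose s) * A)"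
    using f3 f4 f5 f6 by (simp add: algebra_simps)
  then have "C * B = ((s+k) choose s) * A" using assms(1) by simp
  then show ?thesis unfolding C_def A_def B_def .
qed

lemma pair_eq:
  fixes j i k p s :: nat assumes "j + i = s*p"
  shows "(j+k*p)*(i+k*p) = j*i + k*(s+k)*p^2"
proof -
  have "(j+k*p)*(i+k*p) = j*i + k*p*(j+i) + k*k*p*p" by (simp add: algebra_simps)
  also have "\<dots> = j*i + k*(s+k)*p^2" using assms by (simp add: algebra_simps power2_eq_square)
  finally show ?thesis .
qed

theorem lemma2p10:
  fixes p r m s :: nat
  assumes "prime p" and "odd p" and "r \<ge> 1" and "m \<ge> 1"
    and "s < m * p ^ (r - 1)"
  shows "[(m * p ^ r) choose (s * p) = (m * p ^ (r - 1)) choose s] (mod p ^ (2 * r))"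
proof -
  have hp: "p > 0" using assms(1) prime_gt_0_nat by blast
  define n where "n = m * p^(r-1)"
  define k where "k = n - s"
  have nsk: "n = s + k" using assms(5) unfolding n_def k_def by simp
  have pr: "p^r = p^(r-1) * p" using assms(3) by (metis One_nat_def Suc_pred less_eq_Suc_le power_Suc2)
  have "m * p^r = n * p" unfolding n_def using pr by simp
  then have top: "m * p^r = s*p + k*p" using nsk by (simp add: algebra_simps)
  define Q where "Q = {j\<in>{1..s*p}. \<not> p dvd j}"
  define A where "A = (\<Prod>j\<in>Q. j + k*p)"
  define B where "B = (\<Prod>j\<in>Q. j)"
  define C where "C = (m * p ^ r) choose (s * p)"
  define Cn where "Cn = n choose s"
  have finQ: "finite Q" unfolding Q_def by simp
  have ident: "C * B = Cn * A"
    unfolding C_def Cn_def A_def B_def Q_def top nsk using binom_identity[OF hp, of s k] by simp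
  have Qsym: "\<And>j. j \<in> Q \<Longrightarrow> s*p - j \<in> Q \<and> s*p - (s*p - j) = j \<and> j \<le> s*p"
  proof -
    fix j assume "j \<in> Q"
    then have j: "1 \<le> j" "j \<le> s*p" "\<not> p dvd j" unfolding Q_def by auto
    have "j \<noteq> s*p" using j(3) by auto
    then have "1 \<le> s*p - j" using j by simp
    moreover have "\<not> p dvd (s*p - j)"
    proof
      assume "p dvd (s*p - j)"
      then have "p dvd (s*p - (s*p - j))" by (simp add: dvd_diff_nat)
      then show False using j by simp
    qed
    ultimately show "s*p - j \<in> Q \<and> s*p - (s*p - j) = j \<and> j \<le> s*p" using j unfolding Q_def by auto
  qed
  have reidx: "(\<Prod>j\<in>Q. f j) = (\<Prod>j\<in>Q. f (s*p - j))" for f :: "nat \<Rightarrow> nat"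
    by (rule prod.reindex_bij_witness[of Q "\<lambda>j. s*p - j" "\<lambda>j. s*p - j"]) (use Qsym in auto)
  have AA: "A * A = (\<Prod>j\<in>Q. j*(s*p-j) + k*n*p^2)"
  proof -
    have "A * A = (\<Prod>j\<in>Q. j + k*p) * (\<Prod>j\<in>Q. (s*p - j) + k*p)"
      unfolding A_def using reidx[of "\<lambda>j. j + k*p"] by simp
    also have "\<dots> = (\<Prod>j\<in>Q. (j + k*p) * ((s*p - j) + k*p))" by (simp add: prod.distrib)
    also have "\<dots> = (\<Prod>j\<in>Q. j*(s*p-j) + k*n*p^2)"
    proof (rule prod.cong[OF refl])
      fix j assume "j \<in> Q"
      then have "j + (s*p - j) = s*p" using Qsym by auto
      then show "(j + k*p) * ((s*p - j) + k*p) = j*(s*p-j) + k*n*p^2"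
        using pair_eq[of j "s*p-j" s p k] nsk by (simp add: algebra_simps)
    qed
    finally show ?thesis .
  qed
  have BB: "B * B = (\<Prod>j\<in>Q. j*(s*p-j))"
  proof -
    have "B * B = (\<Prod>j\<in>Q. j) * (\<Prod>j\<in>Q. (s*p - j))"
      unfolding B_def using reidx[of "\<lambda>j. j"] by simp
    then show ?thesis by (simp add: prod.distrib)
  qed
  have sq: "[A*A = B*B] (mod (k*n*p^2))"
    unfolding AA BB by (rule cong_prod) (simp add: cong_def)
  then have "int (k*n*p^2) dvd int (A*A) - int (B*B)"
    using cong_int_iff cong_iff_dvd_diff by blast
  then obtain q where q: "int (A*A) - int (B*B) = int (k*n*p^2) * q" by (elim dvdE)
  have absorb: "k * Cn = n * ((n-1) choose s)"
    unfolding k_def Cn_def by (rule binomial_absorb_comp)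
  have "int Cn * (int A - int B) * (int A + int B) = int Cn * (int (A*A) - int (B*B))"
    by (simp add: algebra_simps)
  also have "\<dots> = int (k * Cn) * int n * int p^2 * q" using q by (simp add: algebra_simps)
  also have "\<dots> = int (n*n*p^2) * (int ((n-1) choose s) * q)" unfolding absorb by (simp add: algebra_simps)
  finally have e1: "int Cn * (int A - int B) * (int A + int B) = int (n*n*p^2) * (int ((n-1) choose s) * q)" .
  have "n*n*p^2 = m*m*p^(2*r)"
  proof -
    have "p^(2*r) = p^(r-1)*p^(r-1)*p^2" using pr by (simp add: power_mult_distrib power_mult mult.commute power2_eq_square)
    then show ?thesis unfolding n_def by (simp add: algebra_simps)
  qed
  then have "int (p^(2*r)) dvd int (n*n*p^2)" by simp
  then have d1: "int (p^(2*r)) dvd int Cn * (int A - int B) * (int A + int B)" unfolding e1 by simp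
  have pB: "\<not> p dvd B" unfolding B_def using prime_dvd_prod_iff[OF finQ assms(1)] unfolding Q_def by auto
  have "[A = B] (mod p)" unfolding A_def B_def by (rule cong_prod) (simp add: cong_def)
  then have "[A + B = 2*B] (mod p)" by (metis cong_add cong_refl mult_2)
  have pAB: "\<not> p dvd (A + B)"
  proof
    assume "p dvd A + B"
    then have "p dvd 2*B" using \<open>[A + B = 2*B] (mod p)\<close> cong_dvd_iff by blast
    then have "p dvd 2 \<or> p dvd B" using assms(1) prime_dvd_mult_iff by blast
    then have "p dvd 2" using pB by blast
    then have "p \<le> 2" by (simp add: dvd_imp_le)
    moreover have "p \<ge> 2" using assms(1) prime_ge_2_nat by blast
    ultimately have "p = 2" by simp
    then show False using assms(2) by simp
  qed
  have cop1: "coprime (int (p^(2*r))) (int A + int B)"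
    using prime_imp_coprime[OF assms(1) pAB] by (metis coprime_int_iff coprime_power_left_iff of_nat_add)
  have cop2: "coprime (int (p^(2*r))) (int B)"
    using prime_imp_coprime[OF assms(1) pB] by (metis coprime_int_iff coprime_power_left_iff)
  have d2: "int (p^(2*r)) dvd int Cn * (int A - int B)"
    using d1 coprime_dvd_mult_left_iff[OF cop1] by blast
  have "(int C - int Cn) * int B = int Cn * (int A - int B)"
    using arg_cong[OF ident, of int] by (simp add: algebra_simps)
  then have "int (p^(2*r)) dvd (int C - int Cn) * int B" using d2 by simp
  then have "int (p^(2*r)) dvd int C - int Cn" using coprime_dvd_mult_left_iff[OF cop2] by blast
  then have "[int C = int Cn] (mod int (p^(2*r)))" using cong_iff_dvd_diff by blast
  then have "[C = Cn] (mod p^(2*r))" using cong_int_iff by blast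
  then show ?thesis unfolding C_def Cn_def n_def .
qed

end
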